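(* Let $Z_0=(X_0,Y_0)$ be a Filippov system for which $p\in\Sigma$ is an invisible cusp-fold singularity of degree $1$, i.e. $p$ is a cusp of $X_0$ and an invisible fold of $Y_0$, $S_{X_0}$ and $S_{Y_0}$ intersect transversally at $p$, and $Y_0X_0f(p)\neq0$. Then there exist a neighborhood $\mathcal{U}$ of $Z_0$ in $\Omega^\infty$ and a neighborhood $U\subset\mathbb{R}^3$ of $p$ such that no $Z\in\mathcal{U}$ has a crossing limit cycle contained in $U$.
   Context: Let $M\subset\mathbb{R}^3$ be open, $f:M\to\mathbb{R}$ smooth with $0$ a regular value, $\Sigma=f^{-1}(0)$, $M^{\pm}=\{\pm f>0\}$. $\Omega^\infty$ is the space of Filippov (piecewise smooth) systems $Z=(X,Y)$ with switching manifold $\Sigma$, where $X,Y$ are $\mathcal{C}^\infty$ vector fields, $X$ acting on $M^+$ and $Y$ on $M^-$, with the usual $\mathcal{C}^\infty$ topology on pairs; trajectories follow Filippov's convention. Lie derivatives: $Xf(p)=\langle X(p),\nabla f(p)\rangle$, $X^kf=X(X^{k-1}f)$, $YXf=Y(Xf)$; $S_X=\{p\in\Sigma:Xf(p)=0\}$. The crossing region is $\Sigma^c=\{p\in\Sigma: Xf(p)Yf(p)>0\}$. A point $p\in\Sigma$ is a fold of $X$ if $Xf(p)=0\neq X^2f(p)$; a cusp of $X$ if $Xf(p)=X^2f(p)=0$, $X^3f(p)\neq0$ and $\det(\nabla f(p),\nabla Xf(p),\nabla X^2f(p))\neq0$. A fold $p$ of $Y$ (acting on $M^-$) is invisible if $Y^2f(p)>0$.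 A crossing limit cycle (CLC) of $Z$ is an isolated closed orbit of $Z$ formed by concatenating regular orbit arcs of $X$ in $M^+$ and of $Y$ in $M^-$, meeting $\Sigma$ only at points of $\Sigma^c$. *)

theory Defs
  imports "HOL-Analysis.Analysis"
begin

type_synonym pt = "real^3"

fun pdl :: "3 list \<Rightarrow> (pt \<Rightarrow> 'b::real_normed_vector) \<Rightarrow> pt \<Rightarrow> 'b" where
  "pdl [] g = g"
| "pdl (i # is) g = (\<lambda>x. frechet_derivative (pdl is g) (at x) (axis i 1))"

definition smooth_on :: "pt set \<Rightarrow> (pt \<Rightarrow> 'b::real_normed_vector) \<Rightarrow> bool" where
  "smooth_on M g \<longleftrightarrow> (\<forall>ds. \<forall>x\<in>M. pdl ds g differentiable (at x))"

definition grad :: "(pt \<Rightarrow> real) \<Rightarrow> pt \<Rightarrow> pt" where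
  "grad g x = (\<chi> i. frechet_derivative g (at x) (axis i 1))"

definition lie :: "(pt \<Rightarrow> pt) \<Rightarrow> (pt \<Rightarrow> real) \<Rightarrow> pt \<Rightarrow> real" where
  "lie X g = (\<lambda>x. X x \<bullet> grad g x)"

definition Sigma_set :: "pt set \<Rightarrow> (pt \<Rightarrow> real) \<Rightarrow> pt set" where
  "Sigma_set M f = {x \<in> M. f x = 0}"

definition Mplus :: "pt set \<Rightarrow> (pt \<Rightarrow> real) \<Rightarrow> pt set" where
  "Mplus M f = {x \<in> M. f x > 0}"

definition Mminus :: "pt set \<Rightarrow> (pt \<Rightarrow> real) \<Rightarrow> pt set" where
  "Mminus M f = {x \<in> M. f x < 0}"

definition crossing_region :: "pt set \<Rightarrow> (pt \<Rightarrow> real) \<Rightarrow> (pt \<Rightarrow> pt) \<Rightarrow> (pt \<Rightarrow> pt) \<Rightarrow> pt set" where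
  "crossing_region M f X Y = {x \<in> Sigma_set M f. lie X f x * lie Y f x > 0}"

definition is_cusp :: "pt set \<Rightarrow> (pt \<Rightarrow> real) \<Rightarrow> (pt \<Rightarrow> pt) \<Rightarrow> pt \<Rightarrow> bool" where
  "is_cusp M f X p \<longleftrightarrow> p \<in> Sigma_set M f \<and> lie X f p = 0 \<and> lie X (lie X f) p = 0
     \<and> lie X (lie X (lie X f)) p \<noteq> 0
     \<and> det (vector [grad f p, grad (lie X f) p, grad (lie X (lie X f)) p] :: real^3^3) \<noteq> 0"

definition is_fold :: "pt set \<Rightarrow> (pt \<Rightarrow> real) \<Rightarrow> (pt \<Rightarrow> pt) \<Rightarrow> pt \<Rightarrow> bool" where
  "is_fold M f X p \<longleftrightarrow> p \<in> Sigma_set M f \<and> lie X f p = 0 \<and> lie X (lie X f) p \<noteq> 0"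

text \<open>Invisible fold of Y (Y acting on M^-).\<close>
definition is_invisible_fold_minus :: "pt set \<Rightarrow> (pt \<Rightarrow> real) \<Rightarrow> (pt \<Rightarrow> pt) \<Rightarrow> pt \<Rightarrow> bool" where
  "is_invisible_fold_minus M f Y p \<longleftrightarrow> is_fold M f Y p \<and> lie Y (lie Y f) p > 0"

text \<open>Tangent line at p of the curve S_X = {x in Sigma. Xf x = 0} (regular level set).\<close>
definition tangent_SX :: "(pt \<Rightarrow> real) \<Rightarrow> (pt \<Rightarrow> pt) \<Rightarrow> pt \<Rightarrow> pt set" where
  "tangent_SX f X p = {v. grad f p \<bullet> v = 0 \<and> grad (lie X f) p \<bullet> v = 0}"

definition transversal_at :: "(pt \<Rightarrow> real) \<Rightarrow> (pt \<Rightarrow> pt) \<Rightarrow> (pt \<Rightarrow> pt) \<Rightarrow> pt \<Rightarrow> bool" where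
  "transversal_at f X Y p \<longleftrightarrow>
     {a + b | a b. a \<in> tangent_SX f X p \<and> b \<in> tangent_SX f Y p} = {v. grad f p \<bullet> v = 0}"

definition closed_crossing_orbit ::
  "pt set \<Rightarrow> (pt \<Rightarrow> real) \<Rightarrow> (pt \<Rightarrow> pt) \<Rightarrow> (pt \<Rightarrow> pt) \<Rightarrow> (real \<Rightarrow> pt) \<Rightarrow> real \<Rightarrow> bool" where
  "closed_crossing_orbit M f X Y \<gamma> T \<longleftrightarrow>
     T > 0 \<and> continuous_on UNIV \<gamma> \<and> (\<forall>t. \<gamma> (t + T) = \<gamma> t) \<and> (\<forall>t. \<gamma> t \<in> M)
     \<and> (\<forall>t. \<gamma> t \<in> Mplus M f \<longrightarrow> (\<gamma> has_vector_derivative X (\<gamma> t)) (at t))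
     \<and> (\<forall>t. \<gamma> t \<in> Mminus M f \<longrightarrow> (\<gamma> has_vector_derivative Y (\<gamma> t)) (at t))
     \<and> (\<forall>t. \<gamma> t \<in> Sigma_set M f \<longrightarrow> \<gamma> t \<in> crossing_region M f X Y)
     \<and> finite {t \<in> {0..T}. \<gamma> t \<in> Sigma_set M f}
     \<and> (\<exists>t. \<gamma> t \<in> Sigma_set M f)"

definition crossing_limit_cycle ::
  "pt set \<Rightarrow> (pt \<Rightarrow> real) \<Rightarrow> (pt \<Rightarrow> pt) \<Rightarrow> (pt \<Rightarrow> pt) \<Rightarrow> (real \<Rightarrow> pt) \<Rightarrow> real \<Rightarrow> bool" where
  "crossing_limit_cycle M f X Y \<gamma> T \<longleftrightarrow>
     closed_crossing_orbit M f X Y \<gamma> T \<and>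
     (\<exists>e>0. \<forall>\<delta> S. closed_crossing_orbit M f X Y \<delta> S
        \<and> range \<delta> \<subseteq> (\<Union>x\<in>range \<gamma>. ball x e) \<longrightarrow> range \<delta> = range \<gamma>)"

text \<open>Basic neighbourhoods of the weak (compact-open) C-infinity topology.\<close>
definition Ck_close :: "pt set \<Rightarrow> nat \<Rightarrow> real \<Rightarrow> (pt \<Rightarrow> pt) \<Rightarrow> (pt \<Rightarrow> pt) \<Rightarrow> bool" where
  "Ck_close K n e X X0 \<longleftrightarrow>
     (\<forall>ds. length ds \<le> n \<longrightarrow> (\<forall>x\<in>K. norm (pdl ds X x - pdl ds X0 x) < e))"

end

theory Submission
  imports Defs
begin

lemma key_vector:
  fixes a b :: "real^3"
  assumes a: "a \<noteq> 0" and b: "b \<noteq> 0" and nc: "\<forall>c>0. b \<noteq> - (c *\<^sub>R a)"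
  shows "\<exists>w. w \<bullet> a > 0 \<and> w \<bullet> b > 0"
proof -
  define u where "u = (1 / norm a) *\<^sub>R a"
  define v where "v = (1 / norm b) *\<^sub>R b"
  have nu: "u \<bullet> u = 1" using a unfolding u_def
    by (simp add: inner_commute power2_norm_eq_inner[symmetric] power2_eq_square)
  have nv: "v \<bullet> v = 1" using b unfolding v_def
    by (simp add: inner_commute power2_norm_eq_inner[symmetric] power2_eq_square)
  have m: "1 + u \<bullet> v > 0"
  proof (rule ccontr)
    assume "\<not> 1 + u \<bullet> v > 0"
    then have "(u + v) \<bullet> (u + v) \<le> 0" using nu nv
      by (simp add: inner_add_left inner_add_right inner_commute)
    then have "u + v = 0" by (meson inner_ge_zero inner_eq_zero_iff order_antisym)
    then have "v = - u" by (simp add: add_eq_0_iff)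
    have "b = norm b *\<^sub>R v" using b unfolding v_def by simp
    also have "\<dots> = - (norm b *\<^sub>R u)" using \<open>v = - u\<close> by simp
    also have "\<dots> = - ((norm b / norm a) *\<^sub>R a)" unfolding u_def by (simp add: divide_inverse_commute)
    finally have "b = - ((norm b / norm a) *\<^sub>R a)" .
    moreover have "norm b / norm a > 0" using a b by simp
    ultimately show False using nc by blast
  qed
  have "(u + v) \<bullet> a = norm a * (1 + u \<bullet> v)"
  proof -
    have "a = norm a *\<^sub>R u" using a unfolding u_def by simp
    then have "(u + v) \<bullet> a = norm a * ((u + v) \<bullet> u)" by (metis inner_scaleR_right)
    then show ?thesis using nu by (simp add: inner_add_left inner_add_right inner_commute)
  qed
  moreover have "(u + v) \<bullet> b = norm b * (1 + u \<bullet> v)"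
  proof -
    have "b = norm b *\<^sub>R v" using b unfolding v_def by simp
    then have "(u + v) \<bullet> b = norm b * ((u + v) \<bullet> v)" by (metis inner_scaleR_right)
    then show ?thesis using nv by (simp add: inner_add_left inner_add_right inner_commute add.commute)
  qed
  ultimately show ?thesis using m a b by (intro exI[of _ "u + v"]) simp
qed


lemma no_orbit:
  assumes co: "closed_crossing_orbit M f X Y \<gamma> T" and rg: "range \<gamma> \<subseteq> U"
    and pos: "\<forall>x\<in>U. w \<bullet> X x > 0 \<and> w \<bullet> Y x > 0"
  shows False
proof -
  note H = co[unfolded closed_crossing_orbit_def]
  have T: "T > 0" using H by (elim conjE)
  have cont: "continuous_on UNIV \<gamma>" using H by (elim conjE)
  have per: "\<forall>t. \<gamma> (t + T) = \<gamma> t" using H by (elim conjE)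
  have inM: "\<forall>t. \<gamma> t \<in> M" using H by (elim conjE)
  have dX: "\<forall>t. \<gamma> t \<in> Mplus M f \<longrightarrow> (\<gamma> has_vector_derivative X (\<gamma> t)) (at t)" using H by (elim conjE)
  have dY: "\<forall>t. \<gamma> t \<in> Mminus M f \<longrightarrow> (\<gamma> has_vector_derivative Y (\<gamma> t)) (at t)" using H by (elim conjE)
  have fin: "finite {t \<in> {0..T}. \<gamma> t \<in> Sigma_set M f}" using H by (elim conjE)
  define V where "V t = w \<bullet> \<gamma> t" for t
  have VcontU: "continuous_on UNIV V" unfolding V_def
    using cont by (intro continuous_intros)
  have Vcont: "continuous_on A V" for A using VcontU continuous_on_subset by blast
  have dV: "(\<gamma> has_vector_derivative v) (at t) \<Longrightarrow> (V has_real_derivative (w \<bullet> v)) (at t)" for v t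
    unfolding V_def has_real_derivative_iff_has_vector_derivative has_vector_derivative_def
    by (drule has_derivative_inner_right[where a=w]) (simp add: o_def)
  have deriv: "\<exists>l>0. (V has_real_derivative l) (at t)" if ns: "\<gamma> t \<notin> Sigma_set M f" for t
  proof -
    have U: "\<gamma> t \<in> U" using rg by auto
    have "f (\<gamma> t) > 0 \<or> f (\<gamma> t) < 0" using ns inM unfolding Sigma_set_def by auto
    then show ?thesis
    proof
      assume "f (\<gamma> t) > 0"
      then have "\<gamma> t \<in> Mplus M f" using inM unfolding Mplus_def by auto
      then show ?thesis using dV dX pos U by blast
    next
      assume "f (\<gamma> t) < 0"
      then have "\<gamma> t \<in> Mminus M f" using inM unfolding Mminus_def by auto
      then show ?thesis using dV dY pos U by blast
    qed
  qed
  have Vper: "V (t + T) = V t" for t using per unfolding V_def by simp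
  obtain t0 where t0: "t0 \<in> {0..T}" and mx: "\<forall>t\<in>{0..T}. V t \<le> V t0"
    using continuous_attains_sup[of "{0..T}" V] Vcont T by auto
  have Vmax: "V t \<le> V t0" if "t \<in> {0..2*T}" for t
  proof (cases "t \<le> T")
    case True then show ?thesis using mx that by auto
  next
    case False
    then have "t - T \<in> {0..T}" using that by auto
    moreover have "V t = V (t - T)" using Vper[of "t - T"] by simp
    ultimately show ?thesis using mx by auto
  qed
  define F where "F = {t \<in> {0..T}. \<gamma> t \<in> Sigma_set M f}"
  define F2 where "F2 = F \<union> (\<lambda>s. s + T) ` F"
  have fF2: "finite F2" using fin unfolding F2_def F_def by auto
  have sig: "t \<in> F2" if "t \<in> {0..2*T}" "\<gamma> t \<in> Sigma_set M f" for t
  proof (cases "t \<le> T")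
    case True then show ?thesis using that unfolding F2_def F_def by auto
  next
    case False
    then have "t - T \<in> F" using that per[rule_format, of "t - T"] unfolding F_def by auto
    then have "(t - T) + T \<in> F2" unfolding F2_def by blast
    then show ?thesis by simp
  qed
  define A where "A = (\<lambda>s. s - t0) ` {s \<in> F2. s > t0}"
  have fA: "finite A" using fF2 unfolding A_def by auto
  define \<epsilon> where "\<epsilon> = Min (insert T A)"
  have epos: "\<epsilon> > 0" unfolding \<epsilon>_def using fA T by (auto simp: A_def)
  have eT: "\<epsilon> \<le> T" unfolding \<epsilon>_def using fA by auto
  have nosig: "\<gamma> t \<notin> Sigma_set M f" if "t0 < t" "t < t0 + \<epsilon>" for t
  proof
    assume s: "\<gamma> t \<in> Sigma_set M f"
    have "t \<in> {0..2*T}" using that t0 eT by auto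
    then have "t \<in> F2" using sig s by auto
    then have "t - t0 \<in> A" using that unfolding A_def by auto
    then have "\<epsilon> \<le> t - t0" unfolding \<epsilon>_def using fA by auto
    then show False using that by auto
  qed
  have "\<exists>l z. t0 < z \<and> z < t0 + \<epsilon>/2 \<and> DERIV V z :> l \<and> V (t0 + \<epsilon>/2) - V t0 = (t0 + \<epsilon>/2 - t0) * l"
  proof (rule MVT)
    show "t0 < t0 + \<epsilon>/2" using epos by simp
    show "continuous_on {t0..t0 + \<epsilon> / 2} V" using Vcont by blast
    fix x assume "x < t0 + \<epsilon>/2" "t0 < x"
    then have "\<gamma> x \<notin> Sigma_set M f" using nosig epos by simp
    then obtain l where "(V has_real_derivative l) (at x)" using deriv by blast
    then show "V differentiable (at x)" using real_differentiable_def by blast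
  qed
  then obtain l z where z: "t0 < z" "z < t0 + \<epsilon>/2" and dz: "DERIV V z :> l"
    and eq: "V (t0 + \<epsilon>/2) - V t0 = (t0 + \<epsilon>/2 - t0) * l" by blast
  have "\<gamma> z \<notin> Sigma_set M f" using nosig z epos by simp
  then obtain l' where "l' > 0" "DERIV V z :> l'" using deriv by blast
  then have "l > 0" using dz DERIV_unique by metis
  then have "(t0 + \<epsilon>/2 - t0) * l > 0" using epos by simp
  then have "V (t0 + \<epsilon>/2) > V t0" using eq by linarith
  moreover have "t0 + \<epsilon>/2 \<in> {0..2*T}" using t0 epos eT by auto
  ultimately show False using Vmax by fastforce
qed


theorem theorem3p2:
  fixes M :: "(real^3) set" and f :: "real^3 \<Rightarrow> real"
    and X0 Y0 :: "real^3 \<Rightarrow> real^3" and p :: "real^3"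
  assumes "open M"
    and "smooth_on M f"
    and "\<forall>x\<in>M. f x = 0 \<longrightarrow> grad f x \<noteq> 0"
    and "smooth_on M X0" and "smooth_on M Y0"
    and "is_cusp M f X0 p"
    and "is_invisible_fold_minus M f Y0 p"
    and "transversal_at f X0 Y0 p"
    and "lie Y0 (lie X0 f) p \<noteq> 0"
  shows "\<exists>K n e U. compact K \<and> K \<subseteq> M \<and> e > 0 \<and> open U \<and> p \<in> U \<and>
           (\<forall>X Y. smooth_on M X \<and> smooth_on M Y \<and> Ck_close K n e X X0 \<and> Ck_close K n e Y Y0
              \<longrightarrow> \<not> (\<exists>\<gamma> T. crossing_limit_cycle M f X Y \<gamma> T \<and> range \<gamma> \<subseteq> U))"
proof -
  have pM: "p \<in> M" using assms(6) unfolding is_cusp_def Sigma_set_def by auto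
  have X0p: "X0 p \<noteq> 0" using assms(6) unfolding is_cusp_def lie_def by auto
  have Y0p: "Y0 p \<noteq> 0" using assms(7) unfolding is_invisible_fold_minus_def lie_def by auto
  have nc: "\<forall>c>0. Y0 p \<noteq> - (c *\<^sub>R X0 p)"
  proof (intro allI impI notI)
    fix c :: real assume c: "c > 0" and eq: "Y0 p = - (c *\<^sub>R X0 p)"
    have "lie Y0 (lie X0 f) p = - c * lie X0 (lie X0 f) p"
      unfolding lie_def[of Y0] lie_def[of X0 "lie X0 f"] using eq by simp
    then show False using assms(6,9) unfolding is_cusp_def by simp
  qed
  obtain w where w1: "w \<bullet> X0 p > 0" and w2: "w \<bullet> Y0 p > 0"
    using key_vector[OF X0p Y0p nc] by blast
  define c where "c = min (w \<bullet> X0 p) (w \<bullet> Y0 p) / 2"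
  have c: "c > 0" using w1 w2 unfolding c_def by simp
  have dX0: "X0 differentiable (at p)" using assms(4) pM unfolding smooth_on_def
    by (metis pdl.simps(1))
  have dY0: "Y0 differentiable (at p)" using assms(5) pM unfolding smooth_on_def
    by (metis pdl.simps(1))
  have cX: "isCont (\<lambda>x. w \<bullet> X0 x) p"
    using differentiable_imp_continuous_within[OF dX0] by (intro continuous_intros) auto
  have cY: "isCont (\<lambda>x. w \<bullet> Y0 x) p"
    using differentiable_imp_continuous_within[OF dY0] by (intro continuous_intros) auto
  obtain r1 where r1: "r1 > 0" "\<forall>x. dist x p < r1 \<longrightarrow> dist (w \<bullet> X0 x) (w \<bullet> X0 p) < c"
    using cX c unfolding continuous_at_eps_delta by blast
  obtain r2 where r2: "r2 > 0" "\<forall>x. dist x p < r2 \<longrightarrow> dist (w \<bullet> Y0 x) (w \<bullet> Y0 p) < c"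
    using cY c unfolding continuous_at_eps_delta by blast
  obtain r3 where r3: "r3 > 0" "ball p r3 \<subseteq> M" using assms(1) pM open_contains_ball by blast
  define r where "r = min r1 (min r2 r3) / 2"
  have r: "r > 0" using r1 r2 r3 unfolding r_def by simp
  define e where "e = c / (norm w + 1)"
  have e: "e > 0" using c unfolding e_def by (simp add: add_nonneg_pos)
  have we: "norm w * e < c" unfolding e_def using c
    by (simp add: field_simps add_pos_nonneg)
  have "r < r3" using r r3 unfolding r_def by auto
  then have "cball p r \<subseteq> ball p r3" by (simp add: cball_subset_ball_iff)
  then have KM: "cball p r \<subseteq> M" using r3 by blast
  have close: "w \<bullet> Z x > 0"
    if "\<forall>x\<in>cball p r. norm (Z x - Z0 x) < e" "x \<in> cball p r"
       "\<forall>x. dist x p < R \<longrightarrow> dist (w \<bullet> Z0 x) (w \<bullet> Z0 p) < c" "w \<bullet> Z0 p \<ge> 2 * c" "r < R"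
    for Z Z0 :: "real^3 \<Rightarrow> real^3" and x and R
  proof -
    have "\<bar>w \<bullet> (Z x - Z0 x)\<bar> \<le> norm w * norm (Z x - Z0 x)" by (rule Cauchy_Schwarz_ineq2)
    also have "\<dots> \<le> norm w * e" using that(1,2) by (simp add: less_imp_le mult_left_mono)
    finally have a: "\<bar>w \<bullet> (Z x - Z0 x)\<bar> < c" using we by simp
    have "dist x p < R" using that(2,5) by (auto simp: dist_commute)
    then have b: "\<bar>w \<bullet> Z0 x - w \<bullet> Z0 p\<bar> < c" using that(3) by (auto simp: dist_real_def)
    have "w \<bullet> Z x = w \<bullet> Z0 x + w \<bullet> (Z x - Z0 x)" by (simp add: inner_diff_right)
    then show ?thesis using a b that(4) by linarith
  qed
  have main: "\<not> (\<exists>\<gamma> T. crossing_limit_cycle M f X Y \<gamma> T \<and> range \<gamma> \<subseteq> ball p r)"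
    if h: "Ck_close (cball p r) 0 e X X0" "Ck_close (cball p r) 0 e Y Y0" for X Y
  proof
    assume "\<exists>\<gamma> T. crossing_limit_cycle M f X Y \<gamma> T \<and> range \<gamma> \<subseteq> ball p r"
    then obtain \<gamma> T where g: "closed_crossing_orbit M f X Y \<gamma> T" "range \<gamma> \<subseteq> ball p r"
      unfolding crossing_limit_cycle_def by blast
    have hX: "\<forall>x\<in>cball p r. norm (X x - X0 x) < e"
      using h(1) unfolding Ck_close_def by (auto dest: spec[of _ "[]"])
    have hY: "\<forall>x\<in>cball p r. norm (Y x - Y0 x) < e"
      using h(2) unfolding Ck_close_def by (auto dest: spec[of _ "[]"])
    have rr1: "r < r1" and rr2: "r < r2" using r r1 r2 unfolding r_def by auto
    have "\<forall>x\<in>ball p r. w \<bullet> X x > 0 \<and> w \<bullet> Y x > 0"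
    proof
      fix x assume "x \<in> ball p r"
      then have x: "x \<in> cball p r" by auto
      have "w \<bullet> X0 p \<ge> 2 * c" "w \<bullet> Y0 p \<ge> 2 * c" unfolding c_def by auto
      then show "w \<bullet> X x > 0 \<and> w \<bullet> Y x > 0"
        using close[OF hX x r1(2) _ rr1] close[OF hY x r2(2) _ rr2] by auto
    qed
    then show False using no_orbit[OF g] by blast
  qed
  have fin: "\<forall>X Y. smooth_on M X \<and> smooth_on M Y \<and> Ck_close (cball p r) 0 e X X0 \<and> Ck_close (cball p r) 0 e Y Y0
              \<longrightarrow> \<not> (\<exists>\<gamma> T. crossing_limit_cycle M f X Y \<gamma> T \<and> range \<gamma> \<subseteq> ball p r)"
    using main by blast
  have pr: "p \<in> ball p r" using r by simp
  have H: "compact (cball p r) \<and> cball p r \<subseteq> M \<and> e > 0 \<and> open (ball p r) \<and> p \<in> ball p r \<and>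
           (\<forall>X Y. smooth_on M X \<and> smooth_on M Y \<and> Ck_close (cball p r) 0 e X X0 \<and> Ck_close (cball p r) 0 e Y Y0
              \<longrightarrow> \<not> (\<exists>\<gamma> T. crossing_limit_cycle M f X Y \<gamma> T \<and> range \<gamma> \<subseteq> ball p r))"
    using KM e pr fin by (intro conjI) simp_all
  show ?thesis by (rule exI[of _ "cball p r"], rule exI[of _ "0::nat"], rule exI[of _ e], rule exI[of _ "ball p r"], rule H)
qed

end
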